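(* Let $\mathfrak R$ be either a cubical iterated graph system $\mathfrak R\subseteq\mathfrak R(d_*,L_*,s_* )$ (with $L_*$ its parameter), or the Sierpiński gasket or pentagonal Sierpiński carpet iterated graph system (with $L_*:=2$), and let $G_m$ be its replacement graphs. Then for all types $t$ of $\mathfrak R$ and all $m\in\mathbb N$, \[ d_{G_m}\!\left(I_{t,-}^{(m)},I_{t,+}^{(m)}\right)\ge\frac12\cdot L_*^m, \] where $I_{t,\star}^{(m)}:=(I_{t,\star})^m\subseteq W_m$ and $d_{G_m}(A,B)=\min\{d_{G_m}(a,b):a\in A,b\in B\}$.
   Context: Graphs: $(V,E)$, $V$ finite non-empty, $E\subseteq V\times V$, $(x,y)\in E\Rightarrow(y,x)\notin E$; $d_G$ is the shortest-path metric in the underlying undirected graph. An iterated graph system (IGS) $\mathfrak R$ consists of a connected graph $G_1=(S,E)$, a finite set $\mathcal T$ of types, a surjective typing $\mathfrak t:E\to\mathcal T$ and non-empty gluing rules $I_t\subseteq S\times S$; $I_{t,+}=\{w:(w,v)\in I_t\text{ for some }v\}$ and $I_{t,-}=\{v:(w,v)\in I_t\text{ for some }w\}$. With $W_m=S^m$, $[w]_k=w_1\cdots w_k$, the replacement graphs $G_m=(W_m,E_m)$ are defined recursively: $(w,v)\in E_{m+1}$ iff either (1) $[w]_m=[v]_m$ and $(w_{m+1},v_{m+1})\in E$ (type $\mathfrak t(w_{m+1},v_{m+1})$), or (2) $([w]_m,[v]_m)\in E_m$ and $(w_{m+1},v_{m+1})\in I_{\mathfrak t([w]_m,[v]_m)}$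 (type $\mathfrak t([w]_m,[v]_m)$). Mapping of IGS $\varphi:\mathfrak R\to\mathfrak R'$: graph mapping $G_1\to G_1'$ (edges to edges or collapsed) with (i) if $\varphi(w_1)=\varphi(v_1)$ for an edge $\{w_1,v_1\}$ of type $t$ then $\varphi(w_2)=\varphi(v_2)$ for all $(w_2,v_2)\in I_t$; (ii) if $(w_1,v_1)\in E$ has type $t$ and $(\varphi(w_1),\varphi(v_1))\in E'$ has type $t'$ then $(\varphi(w_2),\varphi(v_2))\in I'_{t'}$ for all $(w_2,v_2)\in I_t$; (iii) if $(w_1,v_1)\in E$ has type $t$ and $(\varphi(v_1),\varphi(w_1))\in E'$ has type $t'$ then $(\varphi(v_2),\varphi(w_2))\in I'_{t'}$ for all $(w_2,v_2)\in I_t$. Isomorphism of IGS: graph isomorphism with it and its inverse mappings of IGS; sub-system: $S\subseteq S'$, same types, inclusion a mapping of IGS. Cubical IGS: for integers $d_*\ge1,s_*\ge1,L_*\ge3$, $\mathfrak R(d_*,L_*,s_* )$ has symbols $\{1,\dots,L_*\}^{d_*}\times\{\underline1,\dots,\underline{s_*}\}$ with coordinates $c_i$ and sheet $s$; types $t_1,\dots,t_{d_*}$; $(w,v)$ is an edge of type $t_j$ iff $c_i(v)=c_i(w)$ ($i\ne j$), $c_j(v)=c_j(w)+1$; $(w,v)\in I_{t_j}$ iff $c_i(w)=c_i(v)$ ($i\ne j$), $(c_j(w),c_j(v))=(L_*,1)$, $s(w)=s(v)$. Sheet- and other-coordinate-preserving maps: $\eta_j:c_j\mapsto L_*+1-c_j$;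 $\alpha^+_{j,k}$ ($j\ne k$) swaps $c_j,c_k$; $\alpha^-_{j,k}$: $c_k\mapsto L_*+1-c_j$, $c_j\mapsto L_*+1-c_k$; $\mathcal G$ the set of these. A cubical IGS is a sub-system $\mathfrak R\subseteq\mathfrak R(d_*,L_*,s_* )$ with (C1) for each $j$, every symbol with $c_i\in\{1,L_*\}$ for all $i\ne j$ and sheet $\underline1$ (condition $(\ast_j)$) is in $S(\mathfrak R)$; (C2) if $w,v$ satisfy $(\ast_j)$, agree off coordinate $j$, and $c_j(v)=c_j(w)+1$, then $(w,v)\in E(\mathfrak R)$; (C3) if $w,v$ satisfy $(\ast_j)$, agree off coordinate $j$, and $(c_j(w),c_j(v))=(L_*,1)$, then $(w,v)\in I_{t_j}(\mathfrak R)$; (C4) each $\alpha\in\mathcal G$ restricts to an isomorphism of IGS $\mathfrak R\to\mathfrak R$. Sierpiński gasket: $S=\{0,1,2\}$, $E=\{(0,1),(1,2),(0,2)\}$ of types $a,b,c$, $I_a=\{(1,0)\}$, $I_b=\{(2,1)\}$, $I_c=\{(2,0)\}$. Pentagonal Sierpiński carpet: $S=\{0,\dots,4\}$, $E=\{(0,1),(1,2),(2,3),(3,4),(4,0)\}$ of types $a,b,c,d,e$, $I_a=\{(1,0),(2,4)\}$, $I_b=\{(2,1),(3,0)\}$, $I_c=\{(3,2),(4,1)\}$, $I_d=\{(4,3),(0,2)\}$, $I_e=\{(0,4),(1,3)\}$. *)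

theory Defs
  imports Main "HOL-Library.Extended_Real"
begin

text \<open>An IGS is given by a symbol set S, a directed edge set E, a typing
function typ (only its values on E matter; the set of types is typ ` E, so
the typing is surjective by construction) and gluing rules I.\<close>

definition IGS :: "'a set \<Rightarrow> ('a \<times> 'a) set \<Rightarrow> ('a \<times> 'a \<Rightarrow> 'b) \<Rightarrow> ('b \<Rightarrow> ('a \<times> 'a) set) \<Rightarrow> bool" where
  "IGS S E typ I \<longleftrightarrow>
     finite S \<and> S \<noteq> {} \<and> E \<subseteq> S \<times> S \<and>
     (\<forall>x y. (x, y) \<in> E \<longrightarrow> (y, x) \<notin> E) \<and>
     (\<forall>x\<in>S. \<forall>y\<in>S. (x, y) \<in> (E \<union> E\<inverse>)\<^sup>*) \<and>
     (\<forall>t\<in>typ ` E. I t \<noteq> {} \<and> I t \<subseteq> S \<times> S)"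

definition gluing_plus :: "('b \<Rightarrow> ('a \<times> 'a) set) \<Rightarrow> 'b \<Rightarrow> 'a set" where
  "gluing_plus I t = {w. \<exists>v. (w, v) \<in> I t}"

definition gluing_minus :: "('b \<Rightarrow> ('a \<times> 'a) set) \<Rightarrow> 'b \<Rightarrow> 'a set" where
  "gluing_minus I t = {v. \<exists>w. (w, v) \<in> I t}"

text \<open>Words of length m (w = w_1 ... w_m as a list; the prefix [w]_k is take k w).\<close>
definition words :: "'a set \<Rightarrow> nat \<Rightarrow> 'a list set" where
  "words S m = {w. length w = m \<and> set w \<subseteq> S}"

text \<open>Typed edges of the replacement graph G_m: triples (w, v, type).
igs_edges ... 0 is empty, which makes igs_edges ... 1 = G_1.\<close>
fun igs_edges :: "'a set \<Rightarrow> ('a \<times> 'a) set \<Rightarrow> ('a \<times> 'a \<Rightarrow> 'b) \<Rightarrow> ('b \<Rightarrow> ('a \<times> 'a) set)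
                   \<Rightarrow> nat \<Rightarrow> ('a list \<times> 'a list \<times> 'b) set" where
  "igs_edges S E typ I 0 = {}"
| "igs_edges S E typ I (Suc m) =
     {(w @ [a], w @ [b], typ (a, b)) | w a b. w \<in> words S m \<and> (a, b) \<in> E}
   \<union> {(w @ [a], v @ [b], t) | w v t a b. (w, v, t) \<in> igs_edges S E typ I m \<and> (a, b) \<in> I t}"

definition igs_graph_edges :: "'a set \<Rightarrow> ('a \<times> 'a) set \<Rightarrow> ('a \<times> 'a \<Rightarrow> 'b) \<Rightarrow> ('b \<Rightarrow> ('a \<times> 'a) set)
                   \<Rightarrow> nat \<Rightarrow> ('a list \<times> 'a list) set" where
  "igs_graph_edges S E typ I m = {(w, v). \<exists>t. (w, v, t) \<in> igs_edges S E typ I m}"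

definition graph_dist :: "'v set \<Rightarrow> ('v \<times> 'v) set \<Rightarrow> 'v \<Rightarrow> 'v \<Rightarrow> enat" where
  "graph_dist V F x y =
     (INF p \<in> {p. p \<noteq> [] \<and> hd p = x \<and> last p = y \<and> set p \<subseteq> V \<and>
                 successively (\<lambda>a b. (a, b) \<in> F \<or> (b, a) \<in> F) p}.
        enat (length p - 1))"

definition graph_setdist :: "'v set \<Rightarrow> ('v \<times> 'v) set \<Rightarrow> 'v set \<Rightarrow> 'v set \<Rightarrow> enat" where
  "graph_setdist V F A B = (INF a \<in> A. INF b \<in> B. graph_dist V F a b)"

definition igs_mapping ::
  "('a \<Rightarrow> 'c) \<Rightarrow> 'a set \<Rightarrow> ('a \<times> 'a) set \<Rightarrow> ('a \<times> 'a \<Rightarrow> 'b) \<Rightarrow> ('b \<Rightarrow> ('a \<times> 'a) set)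
     \<Rightarrow> 'c set \<Rightarrow> ('c \<times> 'c) set \<Rightarrow> ('c \<times> 'c \<Rightarrow> 'b) \<Rightarrow> ('b \<Rightarrow> ('c \<times> 'c) set) \<Rightarrow> bool" where
  "igs_mapping \<phi> S E typ I S' E' typ' I' \<longleftrightarrow>
     (\<forall>x\<in>S. \<phi> x \<in> S') \<and>
     (\<forall>(w, v)\<in>E. \<phi> w = \<phi> v \<or> (\<phi> w, \<phi> v) \<in> E' \<or> (\<phi> v, \<phi> w) \<in> E') \<and>
     (\<forall>(w1, v1)\<in>E. \<phi> w1 = \<phi> v1 \<longrightarrow>
        (\<forall>(w2, v2)\<in>I (typ (w1, v1)). \<phi> w2 = \<phi> v2)) \<and>
     (\<forall>(w1, v1)\<in>E. (\<phi> w1, \<phi> v1) \<in> E' \<longrightarrow>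
        (\<forall>(w2, v2)\<in>I (typ (w1, v1)). (\<phi> w2, \<phi> v2) \<in> I' (typ' (\<phi> w1, \<phi> v1)))) \<and>
     (\<forall>(w1, v1)\<in>E. (\<phi> v1, \<phi> w1) \<in> E' \<longrightarrow>
        (\<forall>(w2, v2)\<in>I (typ (w1, v1)). (\<phi> v2, \<phi> w2) \<in> I' (typ' (\<phi> v1, \<phi> w1))))"

definition graph_iso :: "('a \<Rightarrow> 'c) \<Rightarrow> 'a set \<Rightarrow> ('a \<times> 'a) set \<Rightarrow> 'c set \<Rightarrow> ('c \<times> 'c) set \<Rightarrow> bool" where
  "graph_iso \<phi> S E S' E' \<longleftrightarrow> bij_betw \<phi> S S' \<and>
     (\<forall>x\<in>S. \<forall>y\<in>S. ((x, y) \<in> E \<or> (y, x) \<in> E) \<longleftrightarrow> ((\<phi> x, \<phi> y) \<in> E' \<or> (\<phi> y, \<phi> x) \<in> E'))"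

definition igs_iso ::
  "('a \<Rightarrow> 'c) \<Rightarrow> 'a set \<Rightarrow> ('a \<times> 'a) set \<Rightarrow> ('a \<times> 'a \<Rightarrow> 'b) \<Rightarrow> ('b \<Rightarrow> ('a \<times> 'a) set)
     \<Rightarrow> 'c set \<Rightarrow> ('c \<times> 'c) set \<Rightarrow> ('c \<times> 'c \<Rightarrow> 'b) \<Rightarrow> ('b \<Rightarrow> ('c \<times> 'c) set) \<Rightarrow> bool" where
  "igs_iso \<phi> S E typ I S' E' typ' I' \<longleftrightarrow>
     graph_iso \<phi> S E S' E' \<and>
     igs_mapping \<phi> S E typ I S' E' typ' I' \<and>
     igs_mapping (inv_into S \<phi>) S' E' typ' I' S E typ I"

definition igs_subsystem ::
  "'a set \<Rightarrow> ('a \<times> 'a) set \<Rightarrow> ('a \<times> 'a \<Rightarrow> 'b) \<Rightarrow> ('b \<Rightarrow> ('a \<times> 'a) set)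
     \<Rightarrow> 'a set \<Rightarrow> ('a \<times> 'a) set \<Rightarrow> ('a \<times> 'a \<Rightarrow> 'b) \<Rightarrow> ('b \<Rightarrow> ('a \<times> 'a) set) \<Rightarrow> bool" where
  "igs_subsystem S E typ I S' E' typ' I' \<longleftrightarrow>
     IGS S E typ I \<and> S \<subseteq> S' \<and> typ ` E = typ' ` E' \<and>
     igs_mapping id S E typ I S' E' typ' I'"

text \<open>Symbols of R(d,L,s): (c, k) with c a list of d coordinates in {1..L}
(coordinate c_{j+1} is c ! j, indices 0-based) and sheet k in {1..s}.
Types t_1..t_d are encoded as 0..d-1.\<close>

type_synonym csym = "nat list \<times> nat"

definition cube_S :: "nat \<Rightarrow> nat \<Rightarrow> nat \<Rightarrow> csym set" where
  "cube_S d L s = {(c, k). length c = d \<and> set c \<subseteq> {1..L} \<and> k \<in> {1..s}}"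

definition agree_off :: "nat \<Rightarrow> nat \<Rightarrow> csym \<Rightarrow> csym \<Rightarrow> bool" where
  "agree_off d j w v \<longleftrightarrow> (\<forall>i<d. i \<noteq> j \<longrightarrow> fst v ! i = fst w ! i)"

definition cube_step :: "nat \<Rightarrow> nat \<Rightarrow> csym \<Rightarrow> csym \<Rightarrow> bool" where
  "cube_step d j w v \<longleftrightarrow> agree_off d j w v \<and> fst v ! j = fst w ! j + 1"

definition cube_E :: "nat \<Rightarrow> nat \<Rightarrow> nat \<Rightarrow> (csym \<times> csym) set" where
  "cube_E d L s = {(w, v). w \<in> cube_S d L s \<and> v \<in> cube_S d L s \<and> (\<exists>j<d. cube_step d j w v)}"

definition cube_typ :: "nat \<Rightarrow> csym \<times> csym \<Rightarrow> nat" where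
  "cube_typ d e = (LEAST j. j < d \<and> cube_step d j (fst e) (snd e))"

definition cube_I :: "nat \<Rightarrow> nat \<Rightarrow> nat \<Rightarrow> nat \<Rightarrow> (csym \<times> csym) set" where
  "cube_I d L s j = {(w, v). w \<in> cube_S d L s \<and> v \<in> cube_S d L s \<and> agree_off d j w v \<and>
                          fst w ! j = L \<and> fst v ! j = 1 \<and> snd w = snd v}"

definition cube_eta :: "nat \<Rightarrow> nat \<Rightarrow> csym \<Rightarrow> csym" where
  "cube_eta L j x = ((fst x)[j := L + 1 - fst x ! j], snd x)"

definition cube_alpha_plus :: "nat \<Rightarrow> nat \<Rightarrow> csym \<Rightarrow> csym" where
  "cube_alpha_plus j k x = ((fst x)[j := fst x ! k, k := fst x ! j], snd x)"

definition cube_alpha_minus :: "nat \<Rightarrow> nat \<Rightarrow> nat \<Rightarrow> csym \<Rightarrow> csym" where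
  "cube_alpha_minus L j k x = ((fst x)[k := L + 1 - fst x ! j, j := L + 1 - fst x ! k], snd x)"

definition cube_group :: "nat \<Rightarrow> nat \<Rightarrow> (csym \<Rightarrow> csym) set" where
  "cube_group d L = {cube_eta L j | j. j < d}
     \<union> {cube_alpha_plus j k | j k. j < d \<and> k < d \<and> j \<noteq> k}
     \<union> {cube_alpha_minus L j k | j k. j < d \<and> k < d \<and> j \<noteq> k}"

text \<open>Condition (*_j) (membership in the symbol set of R(d,L,s) is part of it).\<close>
definition cube_star :: "nat \<Rightarrow> nat \<Rightarrow> nat \<Rightarrow> nat \<Rightarrow> csym \<Rightarrow> bool" where
  "cube_star d L s j w \<longleftrightarrow> w \<in> cube_S d L s \<and>
     (\<forall>i<d. i \<noteq> j \<longrightarrow> fst w ! i \<in> {1, L}) \<and> snd w = 1"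

definition cubical_IGS ::
  "nat \<Rightarrow> nat \<Rightarrow> nat \<Rightarrow> csym set \<Rightarrow> (csym \<times> csym) set \<Rightarrow> (csym \<times> csym \<Rightarrow> nat)
     \<Rightarrow> (nat \<Rightarrow> (csym \<times> csym) set) \<Rightarrow> bool" where
  "cubical_IGS d L s S E typ I \<longleftrightarrow>
     d \<ge> 1 \<and> s \<ge> 1 \<and> L \<ge> 3 \<and>
     igs_subsystem S E typ I (cube_S d L s) (cube_E d L s) (cube_typ d) (cube_I d L s) \<and>
     (\<forall>j<d. \<forall>w. cube_star d L s j w \<longrightarrow> w \<in> S) \<and>
     (\<forall>j<d. \<forall>w v. cube_star d L s j w \<and> cube_star d L s j v \<and> agree_off d j w v \<and>
                fst v ! j = fst w ! j + 1 \<longrightarrow> (w, v) \<in> E) \<and>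
     (\<forall>j<d. \<forall>w v. cube_star d L s j w \<and> cube_star d L s j v \<and> agree_off d j w v \<and>
                fst w ! j = L \<and> fst v ! j = 1 \<longrightarrow> (w, v) \<in> I j) \<and>
     (\<forall>\<alpha>\<in>cube_group d L. igs_iso \<alpha> S E typ I S E typ I)"

section \<open>Sierpinski gasket and pentagonal carpet (types a,b,c,... encoded as 0,1,2,...)\<close>

definition gasket_S :: "nat set" where "gasket_S = {0, 1, 2}"
definition gasket_E :: "(nat \<times> nat) set" where "gasket_E = {(0, 1), (1, 2), (0, 2)}"
definition gasket_typ :: "nat \<times> nat \<Rightarrow> nat" where
  "gasket_typ e = (if e = (0, 1) then 0 else if e = (1, 2) then 1 else 2)"
definition gasket_I :: "nat \<Rightarrow> (nat \<times> nat) set" where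
  "gasket_I t = (if t = 0 then {(1, 0)} else if t = 1 then {(2, 1)} else if t = 2 then {(2, 0)} else {})"

definition pent_S :: "nat set" where "pent_S = {0, 1, 2, 3, 4}"
definition pent_E :: "(nat \<times> nat) set" where "pent_E = {(0, 1), (1, 2), (2, 3), (3, 4), (4, 0)}"
definition pent_typ :: "nat \<times> nat \<Rightarrow> nat" where
  "pent_typ e = fst e"
definition pent_I :: "nat \<Rightarrow> (nat \<times> nat) set" where
  "pent_I t = (if t = 0 then {(1, 0), (2, 4)} else if t = 1 then {(2, 1), (3, 0)}
     else if t = 2 then {(3, 2), (4, 1)} else if t = 3 then {(4, 3), (0, 2)}
     else if t = 4 then {(0, 4), (1, 3)} else {})"

end

theory Submission
  imports Defs
begin


lemma path_lip:
  fixes f :: "'v \<Rightarrow> int"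
  assumes lip: "\<And>x y. (x, y) \<in> F \<Longrightarrow> \<bar>f x - f y\<bar> \<le> 1"
  shows "p \<noteq> [] \<Longrightarrow> successively (\<lambda>a b. (a, b) \<in> F \<or> (b, a) \<in> F) p
         \<Longrightarrow> \<bar>f (last p) - f (hd p)\<bar> \<le> int (length p - 1)"
proof (induction p)
  case Nil then show ?case by simp
next
  case (Cons a p)
  show ?case
  proof (cases p)
    case Nil then show ?thesis by simp
  next
    case (Cons b p')
    have e: "(a, b) \<in> F \<or> (b, a) \<in> F" and s: "successively (\<lambda>a b. (a, b) \<in> F \<or> (b, a) \<in> F) p"
      using Cons.prems Cons by auto
    have ih: "\<bar>f (last p) - f b\<bar> \<le> int (length p - 1)" using Cons.IH s Cons by simp
    have "\<bar>f b - f a\<bar> \<le> 1" using e lip by force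
    then show ?thesis using ih Cons by auto
  qed
qed

lemma dist_lower:
  fixes f :: "'v \<Rightarrow> int"
  assumes lip: "\<And>x y. (x, y) \<in> F \<Longrightarrow> \<bar>f x - f y\<bar> \<le> 1"
    and sep: "\<And>a b. a \<in> A \<Longrightarrow> b \<in> B \<Longrightarrow> int K \<le> \<bar>f a - f b\<bar>"
  shows "enat K \<le> graph_setdist V F A B"
  unfolding graph_setdist_def graph_dist_def
proof (intro INF_greatest)
  fix a b p assume a: "a \<in> A" and b: "b \<in> B" and
    p: "p \<in> {p. p \<noteq> [] \<and> hd p = a \<and> last p = b \<and> set p \<subseteq> V \<and>
                 successively (\<lambda>a b. (a, b) \<in> F \<or> (b, a) \<in> F) p}"
  have p1: "p \<noteq> []" "hd p = a" "last p = b" "successively (\<lambda>a b. (a, b) \<in> F \<or> (b, a) \<in> F) p"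
    using p by auto
  have "\<bar>f (last p) - f (hd p)\<bar> \<le> int (length p - 1)"
    by (rule path_lip[OF lip p1(1) p1(4)])
  moreover have "\<bar>f (last p) - f (hd p)\<bar> = \<bar>f a - f b\<bar>" unfolding p1(2,3) by (rule abs_minus_commute)
  moreover have "int K \<le> \<bar>f a - f b\<bar>" using sep[OF a b] .
  ultimately show "enat K \<le> enat (length p - 1)" by simp
qed

lemma final_conv:
  assumes "enat K \<le> X" "r \<le> real K"
  shows "ereal r \<le> ereal_of_enat X"
proof -
  have "ereal r \<le> ereal (real K)" using assms(2) by simp
  also have "\<dots> = ereal_of_enat (enat K)" by simp
  also have "\<dots> \<le> ereal_of_enat X" using assms(1) ereal_of_enat_le_iff by blast
  finally show ?thesis .
qed

primrec lin :: "int \<Rightarrow> ('a \<Rightarrow> int) \<Rightarrow> 'a list \<Rightarrow> int" where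
  "lin L c [] = 0"
| "lin L c (a # r) = L * lin L c r + c a"

definition phi :: "int \<Rightarrow> ('a \<Rightarrow> int) \<Rightarrow> 'a list \<Rightarrow> int" where
  "phi L c w = lin L c (rev w)"

lemma phi_snoc: "phi L c (w @ [a]) = L * phi L c w + c a"
  by (simp add: phi_def)

lemma lin_edges:
  assumes K1: "\<And>e a b. e \<in> E \<Longrightarrow> (a, b) \<in> I (typ e) \<Longrightarrow> c a - c b = (L - 1) * (c (snd e) - c (fst e))"
  shows "(w, v, t) \<in> igs_edges S E typ I m \<Longrightarrow>
     \<exists>e\<in>E. typ e = t \<and> phi L c v - phi L c w = c (snd e) - c (fst e)"
proof (induction m arbitrary: w v t)
  case 0 then show ?case by simp
next
  case (Suc m)
  from Suc.prems consider
    (inner) w0 a b where "w = w0 @ [a]" "v = w0 @ [b]" "t = typ (a, b)" "(a, b) \<in> E"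
  | (gl) w0 v0 a b where "w = w0 @ [a]" "v = v0 @ [b]" "(w0, v0, t) \<in> igs_edges S E typ I m" "(a, b) \<in> I t"
    by auto
  then show ?case
  proof cases
    case inner then show ?thesis by (intro bexI[of _ "(a, b)"]) (auto simp: phi_snoc)
  next
    case gl
    obtain e where e: "e \<in> E" "typ e = t" "phi L c v0 - phi L c w0 = c (snd e) - c (fst e)"
      using Suc.IH[OF gl(3)] by blast
    have k: "c a - c b = (L - 1) * (c (snd e) - c (fst e))" using K1[OF e(1)] gl(4) e(2) by simp
    have "phi L c v - phi L c w = L * (phi L c v0 - phi L c w0) + c b - c a"
      using gl by (simp add: phi_snoc algebra_simps)
    also have "\<dots> = L * (c (snd e) - c (fst e)) - (c a - c b)" using e(3) by simp
    also have "\<dots> = c (snd e) - c (fst e)" by (simp only: k) (simp add: algebra_simps)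
    finally show ?thesis using e by blast
  qed
qed

lemma lin_sep:
  "list_all2 (\<lambda>a b. c a - c b = (L - 1) * \<delta>) u u' \<Longrightarrow>
   lin L c u - lin L c u' = \<delta> * (L ^ length u - 1)"
proof (induction rule: list_all2_induct)
  case Nil then show ?case by simp
next
  case (Cons a u b u')
  have "lin L c (a # u) - lin L c (b # u') = L * (lin L c u - lin L c u') + (c a - c b)" 
    by (simp add: algebra_simps)
  also have "\<dots> = L * (\<delta> * (L ^ length u - 1)) + (L - 1) * \<delta>" by (simp only: Cons.IH Cons.hyps(1))
  also have "\<dots> = \<delta> * (L ^ length (a # u) - 1)" by (simp add: algebra_simps)
  finally show ?case .
qed

lemma phi_sep:
  assumes "u \<in> words P m" "u' \<in> words M m"
    and "\<And>a b. a \<in> P \<Longrightarrow> b \<in> M \<Longrightarrow> c a - c b = (L - 1) * \<delta>"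
  shows "phi L c u - phi L c u' = \<delta> * (L ^ m - 1)"
proof -
  have "list_all2 (\<lambda>a b. c a - c b = (L - 1) * \<delta>) (rev u) (rev u')"
    using assms by (auto simp: words_def list_all2_conv_all_nth rev_nth subset_iff)
  from lin_sep[OF this] show ?thesis using assms(1) by (simp add: phi_def words_def)
qed

lemma lin_dist:
  fixes c :: "'a \<Rightarrow> int" and L :: int
  assumes K1: "\<And>e a b. e \<in> E \<Longrightarrow> (a, b) \<in> I (typ e) \<Longrightarrow> c a - c b = (L - 1) * (c (snd e) - c (fst e))"
    and lipE: "\<And>e. e \<in> E \<Longrightarrow> \<bar>c (snd e) - c (fst e)\<bar> \<le> 1"
    and sep: "\<And>a b. a \<in> P \<Longrightarrow> b \<in> M \<Longrightarrow> c a - c b = (L - 1) * \<delta>"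
    and d: "\<bar>\<delta>\<bar> = 1" and L: "L \<ge> 1"
  shows "enat (nat (L ^ m - 1)) \<le> graph_setdist V (igs_graph_edges S E typ I m) (words M m) (words P m)"
proof (rule dist_lower[where f = "phi L c"])
  fix x y assume "(x, y) \<in> igs_graph_edges S E typ I m"
  then obtain t where "(x, y, t) \<in> igs_edges S E typ I m" by (auto simp: igs_graph_edges_def)
  from lin_edges[OF K1 this] obtain e where "e \<in> E" "phi L c y - phi L c x = c (snd e) - c (fst e)"
    by blast
  moreover have "\<bar>phi L c x - phi L c y\<bar> = \<bar>phi L c y - phi L c x\<bar>" by (rule abs_minus_commute)
  ultimately show "\<bar>phi L c x - phi L c y\<bar> \<le> 1" using lipE by simp
next
  fix a b assume "a \<in> words M m" "b \<in> words P m"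
  from phi_sep[OF this(2,1) sep] have "phi L c b - phi L c a = \<delta> * (L ^ m - 1)" .
  moreover have "L ^ m \<ge> 1" using L by simp
  ultimately have "\<bar>phi L c a - phi L c b\<bar> = \<bar>\<delta>\<bar> * \<bar>L ^ m - 1\<bar>"
    by (metis abs_minus_commute abs_mult)
  also have "\<dots> = L ^ m - 1" using d \<open>L ^ m \<ge> 1\<close> by simp
  also have "\<dots> = int (nat (L ^ m - 1))" using \<open>L ^ m \<ge> 1\<close> by simp
  finally show "int (nat (L ^ m - 1)) \<le> \<bar>phi L c a - phi L c b\<bar>" by simp
qed



lemma pow_half:
  assumes "(L::nat) \<ge> 2" "m \<ge> 1"
  shows "real L ^ m / 2 \<le> real (nat (int L ^ m - 1))"
proof -
  have "L ^ 1 \<le> L ^ m" using assms by (intro power_increasing) auto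
  then have h: "L ^ m \<ge> 2" using assms by simp
  have "int L ^ m - 1 = int (L ^ m - 1)" using h by (simp add: of_nat_diff)
  then have "real (nat (int L ^ m - 1)) = real (L ^ m - 1)" by simp
  also have "\<dots> = real L ^ m - 1" using h by (simp add: of_nat_diff)
  finally have "real (nat (int L ^ m - 1)) = real L ^ m - 1" .
  moreover have "real L ^ m \<ge> 2" using h
    by (metis of_nat_le_iff of_nat_numeral of_nat_power)
  ultimately show ?thesis by simp
qed

lemma gasket_I_typ: "e \<in> gasket_E \<Longrightarrow> gasket_I (gasket_typ e) = {(snd e, fst e)}"
  by (auto simp: gasket_E_def gasket_I_def gasket_typ_def)

lemma gasket_part:
  assumes t: "t \<in> gasket_typ ` gasket_E" and m: "1 \<le> m"
  shows "ereal (real 2 ^ m / 2) \<le> ereal_of_enat (graph_setdist (words gasket_S m)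
            (igs_graph_edges gasket_S gasket_E gasket_typ gasket_I m)
            (words (gluing_minus gasket_I t) m) (words (gluing_plus gasket_I t) m))"
proof -
  have key: "?thesis" if xy: "gluing_minus gasket_I t = {x}" "gluing_plus gasket_I t = {y}" "x \<noteq> y" for x y
  proof -
    let ?c = "\<lambda>z::nat. if z = y then 1 else (0::int)"
    have e: "enat (nat (2 ^ m - 1)) \<le> graph_setdist (words gasket_S m)
            (igs_graph_edges gasket_S gasket_E gasket_typ gasket_I m)
            (words {x} m) (words {y} m)"
      by (rule lin_dist[where c = ?c and \<delta> = 1]) (use xy gasket_I_typ in auto)
    have h: "real 2 ^ m / 2 \<le> real (nat (2 ^ m - 1))" using pow_half[of 2 m] m by simp
    show ?thesis unfolding xy(1,2) by (rule final_conv[OF e h])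
  qed
  from t have "t = 0 \<or> t = 1 \<or> t = 2" by (auto simp: gasket_E_def gasket_typ_def)
  then show ?thesis
  proof (elim disjE)
    assume "t = 0" then show ?thesis
      by (intro key[of 0 1]) (auto simp: gluing_minus_def gluing_plus_def gasket_I_def)
  next
    assume "t = 1" then show ?thesis
      by (intro key[of 1 2]) (auto simp: gluing_minus_def gluing_plus_def gasket_I_def)
  next
    assume "t = 2" then show ?thesis
      by (intro key[of 0 2]) (auto simp: gluing_minus_def gluing_plus_def gasket_I_def)
  qed
qed



lemma map_i: "igs_mapping \<phi> S E typ I S' E' typ' I' \<Longrightarrow> (w, v) \<in> E \<Longrightarrow> \<phi> w = \<phi> v \<or> (\<phi> w, \<phi> v) \<in> E' \<or> (\<phi> v, \<phi> w) \<in> E'"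
  unfolding igs_mapping_def by fast
lemma map_ii: "igs_mapping \<phi> S E typ I S' E' typ' I' \<Longrightarrow> (w1, v1) \<in> E \<Longrightarrow> (\<phi> w1, \<phi> v1) \<in> E' \<Longrightarrow> (w2, v2) \<in> I (typ (w1, v1)) \<Longrightarrow> (\<phi> w2, \<phi> v2) \<in> I' (typ' (\<phi> w1, \<phi> v1))"
  unfolding igs_mapping_def by fast
lemma map_iii: "igs_mapping \<phi> S E typ I S' E' typ' I' \<Longrightarrow> (w1, v1) \<in> E \<Longrightarrow> (\<phi> v1, \<phi> w1) \<in> E' \<Longrightarrow> (w2, v2) \<in> I (typ (w1, v1)) \<Longrightarrow> (\<phi> v2, \<phi> w2) \<in> I' (typ' (\<phi> v1, \<phi> w1))"
  unfolding igs_mapping_def by fast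

lemma cube_E_step:
  assumes "(x, y) \<in> cube_E d L s"
  shows "cube_typ d (x, y) < d \<and> cube_step d (cube_typ d (x, y)) x y"
proof -
  have "\<exists>j. j < d \<and> cube_step d j x y" using assms by (auto simp: cube_E_def)
  from LeastI_ex[OF this] show ?thesis by (simp add: cube_typ_def)
qed

lemma cube_S_bounds:
  assumes "z \<in> cube_S d L s" "J < d"
  shows "1 \<le> fst z ! J \<and> fst z ! J \<le> L"
proof -
  have h: "set (fst z) \<subseteq> {1..L}" "length (fst z) = d" using assms(1) unfolding cube_S_def by (cases z; auto)+
  have "fst z ! J \<in> set (fst z)" using h(2) assms(2) by simp
  then show ?thesis using h(1) by auto
qed

context
  fixes d L s S E tp I
  assumes cub: "cubical_IGS d L s S E tp I"
begin

lemma cL: "L \<ge> 3" using cub by (simp add: cubical_IGS_def)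

lemma cIGS: "IGS S E tp I" using cub by (simp add: cubical_IGS_def igs_subsystem_def)

lemma cSsub: "S \<subseteq> cube_S d L s" using cub by (simp add: cubical_IGS_def igs_subsystem_def)

lemma cmap: "igs_mapping id S E tp I (cube_S d L s) (cube_E d L s) (cube_typ d) (cube_I d L s)"
  using cub by (simp add: cubical_IGS_def igs_subsystem_def)

lemma cdir:
  assumes "(x, y) \<in> E"
  shows "(x, y) \<in> cube_E d L s \<or> (y, x) \<in> cube_E d L s"
proof -
  have "x \<noteq> y" using cIGS assms unfolding IGS_def by blast
  then show ?thesis using map_i[OF cmap assms] by simp
qed

lemma cI_sub: 
  assumes "t \<in> tp ` E" shows "I t \<subseteq> cube_S d L s \<times> cube_S d L s"
proof -
  have "I t \<subseteq> S \<times> S" using cIGS assms unfolding IGS_def by blast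
  then show ?thesis using cSsub by blast
qed

lemma cK1:
  assumes e: "(x, y) \<in> E" and ab: "(a, b) \<in> I (tp (x, y))" and k: "k < d"
  shows "int (fst a ! k) - int (fst b ! k) = (int L - 1) * (int (fst y ! k) - int (fst x ! k))"
  using cdir[OF e]
proof
  assume xy: "(x, y) \<in> cube_E d L s"
  let ?J = "cube_typ d (x, y)"
  have st: "?J < d" "cube_step d ?J x y" using cube_E_step[OF xy] by auto
  have "(id a, id b) \<in> cube_I d L s (cube_typ d (id x, id y))" using map_ii[OF cmap e _ ab] xy by simp
  then have "(a, b) \<in> cube_I d L s ?J" by simp
  then have abI: "agree_off d ?J a b" "fst a ! ?J = L" "fst b ! ?J = 1" by (auto simp: cube_I_def)
  show ?thesis
  proof (cases "k = ?J")
    case True then show ?thesis using st abI by (simp add: cube_step_def)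
  next
    case False then show ?thesis using st abI k by (simp add: cube_step_def agree_off_def)
  qed
next
  assume yx: "(y, x) \<in> cube_E d L s"
  let ?J = "cube_typ d (y, x)"
  have st: "?J < d" "cube_step d ?J y x" using cube_E_step[OF yx] by auto
  have "(id b, id a) \<in> cube_I d L s (cube_typ d (id y, id x))" using map_iii[OF cmap e _ ab] yx by simp
  then have "(b, a) \<in> cube_I d L s ?J" by simp
  then have abI: "agree_off d ?J b a" "fst b ! ?J = L" "fst a ! ?J = 1" by (auto simp: cube_I_def)
  show ?thesis
  proof (cases "k = ?J")
    case True then show ?thesis using st abI by (simp add: cube_step_def algebra_simps)
  next
    case False then show ?thesis using st abI k by (simp add: cube_step_def agree_off_def)
  qed
qed

lemma cLip:
  assumes e: "(x, y) \<in> E" and k: "k < d"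
  shows "\<bar>int (fst y ! k) - int (fst x ! k)\<bar> \<le> 1"
  using cdir[OF e]
proof
  assume xy: "(x, y) \<in> cube_E d L s"
  let ?J = "cube_typ d (x, y)"
  have st: "?J < d" "cube_step d ?J x y" using cube_E_step[OF xy] by auto
  show ?thesis
  proof (cases "k = ?J")
    case True then show ?thesis using st(2) by (simp add: cube_step_def)
  next
    case False
    then have "fst y ! k = fst x ! k" using st(2) k unfolding cube_step_def agree_off_def by blast
    then show ?thesis by simp
  qed
next
  assume yx: "(y, x) \<in> cube_E d L s"
  let ?J = "cube_typ d (y, x)"
  have st: "?J < d" "cube_step d ?J y x" using cube_E_step[OF yx] by auto
  show ?thesis
  proof (cases "k = ?J")
    case True then show ?thesis using st(2) by (simp add: cube_step_def)
  next
    case False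
    then have "fst y ! k = fst x ! k" using st(2) k unfolding cube_step_def agree_off_def by fastforce
    then show ?thesis by simp
  qed
qed

lemma cube_part:
  assumes t: "t \<in> tp ` E" and m: "1 \<le> m"
  shows "ereal (real L ^ m / 2) \<le> ereal_of_enat (graph_setdist (words S m) (igs_graph_edges S E tp I m)
            (words (gluing_minus I t) m) (words (gluing_plus I t) m))"
proof -
  obtain x0 y0 where e0: "(x0, y0) \<in> E" "tp (x0, y0) = t" using t by auto
  obtain J where J: "J < d" "\<bar>int (fst y0 ! J) - int (fst x0 ! J)\<bar> = 1"
    using cdir[OF e0(1)]
  proof
    assume xy: "(x0, y0) \<in> cube_E d L s"
    have "cube_typ d (x0, y0) < d \<and> cube_step d (cube_typ d (x0, y0)) x0 y0" using cube_E_step[OF xy] .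
    then have "cube_typ d (x0, y0) < d" "fst y0 ! cube_typ d (x0, y0) = fst x0 ! cube_typ d (x0, y0) + 1"
      unfolding cube_step_def by blast+
    then show ?thesis using that[of "cube_typ d (x0, y0)"] by simp
  next
    assume yx: "(y0, x0) \<in> cube_E d L s"
    have "cube_typ d (y0, x0) < d \<and> cube_step d (cube_typ d (y0, x0)) y0 x0" using cube_E_step[OF yx] .
    then have "cube_typ d (y0, x0) < d" "fst x0 ! cube_typ d (y0, x0) = fst y0 ! cube_typ d (y0, x0) + 1"
      unfolding cube_step_def by blast+
    then show ?thesis using that[of "cube_typ d (y0, x0)"] by simp
  qed
  let ?c = "\<lambda>z::csym. int (fst z ! J)"
  let ?\<delta> = "int (fst y0 ! J) - int (fst x0 ! J)"
  have Isub: "I t \<subseteq> cube_S d L s \<times> cube_S d L s" using cI_sub t by blast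
  have sep: "?c a - ?c b = (int L - 1) * ?\<delta>" if a: "a \<in> gluing_plus I t" and b: "b \<in> gluing_minus I t" for a b
  proof -
    obtain b' where ab': "(a, b') \<in> I t" using a by (auto simp: gluing_plus_def)
    obtain a' where a'b: "(a', b) \<in> I t" using b by (auto simp: gluing_minus_def)
    have k1: "?c a - ?c b' = (int L - 1) * ?\<delta>" using cK1[OF e0(1) _ J(1)] ab' e0(2) by simp
    have k2: "?c a' - ?c b = (int L - 1) * ?\<delta>" using cK1[OF e0(1) _ J(1)] a'b e0(2) by simp
    have mem: "a \<in> cube_S d L s" "b \<in> cube_S d L s" "a' \<in> cube_S d L s" "b' \<in> cube_S d L s"
      using Isub ab' a'b by blast+
    note bnd = cube_S_bounds[OF mem(1) J(1)] cube_S_bounds[OF mem(2) J(1)]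
      cube_S_bounds[OF mem(3) J(1)] cube_S_bounds[OF mem(4) J(1)]
    have "?\<delta> = 1 \<or> ?\<delta> = -1" using J(2) by linarith
    then show ?thesis
    proof
      assume d1: "?\<delta> = 1"
      then show ?thesis using k1 k2 bnd by simp
    next
      assume d1: "?\<delta> = -1"
      then show ?thesis using k1 k2 bnd by simp
    qed
  qed
  have e: "enat (nat (int L ^ m - 1)) \<le> graph_setdist (words S m) (igs_graph_edges S E tp I m)
            (words (gluing_minus I t) m) (words (gluing_plus I t) m)"
  proof (rule lin_dist[where c = ?c and \<delta> = ?\<delta>])
    fix e a b assume "e \<in> E" "(a, b) \<in> I (tp e)"
    then show "?c a - ?c b = (int L - 1) * (?c (snd e) - ?c (fst e))"
      using cK1[OF _ _ J(1), of "fst e" "snd e" a b] by simp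
  next
    fix e assume "e \<in> E"
    then show "\<bar>?c (snd e) - ?c (fst e)\<bar> \<le> 1" using cLip[OF _ J(1), of "fst e" "snd e"] by simp
  next
    fix a b assume "a \<in> gluing_plus I t" "b \<in> gluing_minus I t"
    then show "?c a - ?c b = (int L - 1) * ?\<delta>" by (rule sep)
  next
    show "\<bar>?\<delta>\<bar> = 1" by (rule J(2))
  next
    show "int L \<ge> 1" using cL by simp
  qed
  have h: "real L ^ m / 2 \<le> real (nat (int L ^ m - 1))" using pow_half[of L m] m cL by simp
  show ?thesis by (rule final_conv[OF e h])
qed

end



definition side :: "nat \<Rightarrow> nat set" where "side c = {c mod 5, Suc c mod 5}"
definition far :: "nat \<Rightarrow> nat \<Rightarrow> bool" where "far a c \<longleftrightarrow> (c + 5 - a) mod 5 = 2 \<or> (c + 5 - a) mod 5 = 3"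
definition comb :: "nat \<Rightarrow> nat \<Rightarrow> nat \<Rightarrow> (nat \<Rightarrow> nat) \<Rightarrow> nat" where
 "comb M a r g = (if r = 0 then min (g a) (min (g ((a+1) mod 5)) (M - 1 + g ((a+3) mod 5)))
   else if r = 1 then min (g a) (min (M - 1 + g ((a+2) mod 5)) (g ((a+4) mod 5)))
   else if r = 2 then min (2*M - 1 + g ((a+3) mod 5)) (M + g a)
   else if r = 3 then min (2*M + g ((a+4) mod 5)) (2*M + g ((a+1) mod 5))
   else min (M + g a) (2*M - 1 + g ((a+2) mod 5)))"

lemma five_E: "(a::nat) < 5 \<Longrightarrow> (a = 0 \<Longrightarrow> P) \<Longrightarrow> (a = 1 \<Longrightarrow> P) \<Longrightarrow> (a = 2 \<Longrightarrow> P)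
   \<Longrightarrow> (a = 3 \<Longrightarrow> P) \<Longrightarrow> (a = 4 \<Longrightarrow> P) \<Longrightarrow> P" by arith

lemma m2: "(x1::nat) \<le> y1 + 1 \<Longrightarrow> x2 \<le> y2 + 1 \<Longrightarrow> min x1 x2 \<le> min y1 y2 + 1"
  by (simp add: min_def)

lemma comb_mono:
  assumes a: "a < 5" and h: "\<And>c. c < 5 \<Longrightarrow> g1 c \<le> Suc (g2 c)"
  shows "comb M a r g1 \<le> Suc (comb M a r g2)"
proof -
  have H: "g1 a \<le> Suc (g2 a)" "g1 ((a+1) mod 5) \<le> Suc (g2 ((a+1) mod 5))"
    "g1 ((a+2) mod 5) \<le> Suc (g2 ((a+2) mod 5))" "g1 ((a+3) mod 5) \<le> Suc (g2 ((a+3) mod 5))"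
    "g1 ((a+4) mod 5) \<le> Suc (g2 ((a+4) mod 5))" using h a by simp_all
  have m2': "\<And>x1 x2 y1 y2. (x1::nat) \<le> Suc y1 \<Longrightarrow> x2 \<le> Suc y2 \<Longrightarrow> min x1 x2 \<le> Suc (min y1 y2)"
    by (simp add: min_def)
  consider "r = 0" | "r = 1" | "r = 2" | "r = 3" | "r \<noteq> 0 \<and> r \<noteq> 1 \<and> r \<noteq> 2 \<and> r \<noteq> 3" by blast
  then show ?thesis
  proof cases
    case 1 then show ?thesis unfolding comb_def using H by (simp; intro m2'; linarith)
  next
    case 2 then show ?thesis unfolding comb_def using H by (simp; intro m2'; linarith)
  next
    case 3 then show ?thesis unfolding comb_def using H by (simp; intro m2'; linarith)
  next
    case 4 then show ?thesis unfolding comb_def using H by (simp; intro m2'; linarith)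
  next
    case 5 then show ?thesis unfolding comb_def using H by (simp; intro m2'; linarith)
  qed
qed

lemma comb_zero:
  assumes "a < 5" "x \<in> side a" "g a = 0"
  shows "comb M a ((x + 5 - a) mod 5) g = 0"
proof -
  have "(x + 5 - a) mod 5 = 0 \<or> (x + 5 - a) mod 5 = 1"
    using assms(1,2) by (elim five_E) (auto simp: side_def)
  then show ?thesis using assms(3) unfolding comb_def by auto
qed

lemma comb_far:
  assumes a: "a < 5" and c: "c < 5" and f: "far a c" and x: "x \<in> side c"
    and g: "\<And>c'. c' < 5 \<Longrightarrow> far c' c \<Longrightarrow> K \<le> g c'"
  shows "2 * K + 1 \<le> comb (Suc K) a ((x + 5 - a) mod 5) g"
proof -
  have g0: "far 0 c \<Longrightarrow> K \<le> g 0" and g1: "far 1 c \<Longrightarrow> K \<le> g 1"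
   and g2: "far 2 c \<Longrightarrow> K \<le> g 2" and g3: "far 3 c \<Longrightarrow> K \<le> g 3"
   and g4: "far 4 c \<Longrightarrow> K \<le> g 4" using g by auto
  have x': "x = c mod 5 \<or> x = Suc c mod 5" using x by (auto simp: side_def)
  show ?thesis
    apply (insert f x' g0 g1 g2 g3 g4)
    apply (rule five_E[OF a]; rule five_E[OF c]; simp add: far_def comb_def; elim disjE; simp)
    done
qed

lemma comb_cross:
  assumes x: "x < 5" and a: "a < 5"
    and z1: "g1 (Suc x mod 5) = 0" and f1: "\<And>c'. c' < 5 \<Longrightarrow> far c' (Suc x mod 5) \<Longrightarrow> K \<le> g1 c'"
    and z2: "g2 ((x + 4) mod 5) = 0" and f2: "\<And>c'. c' < 5 \<Longrightarrow> far c' ((x + 4) mod 5) \<Longrightarrow> K \<le> g2 c'"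
  shows "comb (Suc K) a ((x + 5 - a) mod 5) g1 \<le> Suc (comb (Suc K) a ((Suc x mod 5 + 5 - a) mod 5) g2) \<and>
         comb (Suc K) a ((Suc x mod 5 + 5 - a) mod 5) g2 \<le> Suc (comb (Suc K) a ((x + 5 - a) mod 5) g1)"
proof -
  have h1: "far 0 (Suc x mod 5) \<Longrightarrow> K \<le> g1 0" "far 1 (Suc x mod 5) \<Longrightarrow> K \<le> g1 1"
    "far 2 (Suc x mod 5) \<Longrightarrow> K \<le> g1 2" "far 3 (Suc x mod 5) \<Longrightarrow> K \<le> g1 3"
    "far 4 (Suc x mod 5) \<Longrightarrow> K \<le> g1 4" using f1 by auto
  have h2: "far 0 ((x + 4) mod 5) \<Longrightarrow> K \<le> g2 0" "far 1 ((x + 4) mod 5) \<Longrightarrow> K \<le> g2 1"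
    "far 2 ((x + 4) mod 5) \<Longrightarrow> K \<le> g2 2" "far 3 ((x + 4) mod 5) \<Longrightarrow> K \<le> g2 3"
    "far 4 ((x + 4) mod 5) \<Longrightarrow> K \<le> g2 4" using f2 by auto
  show ?thesis
    apply (insert h1 h2 z1 z2)
    apply (rule five_E[OF a]; rule five_E[OF x]; simp add: far_def comb_def; simp add: numeral_2_eq_2 min_def)
    done
qed


primrec pot :: "nat \<Rightarrow> nat \<Rightarrow> nat list \<Rightarrow> nat" where
  "pot 0 = (\<lambda>a w. 0)"
| "pot (Suc m) = (\<lambda>a w. case w of [] \<Rightarrow> 0 | x # u \<Rightarrow> comb (2 ^ m) a ((x + 5 - a) mod 5) (\<lambda>c. pot m c u))"

lemma pot_Cons: "pot (Suc m) a (x # u) = comb (Suc (2 ^ m - 1)) a ((x + 5 - a) mod 5) (\<lambda>c. pot m c u)"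
proof -
  have "Suc (2 ^ m - 1) = (2::nat) ^ m" by simp
  then show ?thesis by simp
qed

lemma side_mod: "side (c mod 5) = side c"
  by (simp add: side_def mod_Suc_eq)

lemma pot_zero: "length w = m \<Longrightarrow> set w \<subseteq> side a \<Longrightarrow> a < 5 \<Longrightarrow> pot m a w = 0"
proof (induction m arbitrary: a w)
  case 0 then show ?case by simp
next
  case (Suc m)
  then obtain x u where w: "w = x # u" by (cases w) auto
  have "pot m a u = 0" using Suc w by auto
  moreover have "x \<in> side a" using Suc.prems w by auto
  ultimately show ?case using w comb_zero[OF Suc.prems(3)] by (simp add: pot_Cons)
qed

lemma pot_far: "length w = m \<Longrightarrow> set w \<subseteq> side c \<Longrightarrow> a < 5 \<Longrightarrow> c < 5 \<Longrightarrow> far a c \<Longrightarrow> 2 ^ m - 1 \<le> pot m a w"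
proof (induction m arbitrary: a w)
  case 0 then show ?case by simp
next
  case (Suc m)
  then obtain x u where w: "w = x # u" by (cases w) auto
  have ih: "\<And>c'. c' < 5 \<Longrightarrow> far c' c \<Longrightarrow> 2 ^ m - 1 \<le> pot m c' u" using Suc w by auto
  have x: "x \<in> side c" using Suc.prems w by auto
  have "2 * (2 ^ m - 1) + 1 \<le> pot (Suc m) a w"
    unfolding w pot_Cons by (rule comb_far[OF Suc.prems(3,4,5) x ih])
  moreover have "2 * (2 ^ m - 1) + 1 = (2::nat) ^ Suc m - 1"
  proof -
    have "(2::nat) ^ m \<ge> 1" "(2::nat) ^ Suc m = 2 * 2 ^ m" by simp_all
    then show ?thesis by linarith
  qed
  ultimately show ?case by simp
qed

lemma edges_len: "(w, v, t) \<in> igs_edges S E tp I m \<Longrightarrow> length w = m \<and> length v = m"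
proof (induction m arbitrary: w v t)
  case 0 then show ?case by simp
next
  case (Suc m)
  from Suc.prems have mem: "(w, v, t) \<in> {(w @ [a], w @ [b], tp (a, b)) | w a b. w \<in> words S m \<and> (a, b) \<in> E}
   \<union> {(w @ [a], v @ [b], t) | w v t a b. (w, v, t) \<in> igs_edges S E tp I m \<and> (a, b) \<in> I t}"
    unfolding igs_edges.simps(2)[of S E tp I m] .
  then consider
    (inner) w0 a b where "w = w0 @ [a]" "v = w0 @ [b]" "w0 \<in> words S m"
  | (gl) w0 v0 a b where "w = w0 @ [a]" "v = v0 @ [b]" "(w0, v0, t) \<in> igs_edges S E tp I m"
    by blast
  then show ?case
  proof cases
    case inner then show ?thesis by (simp add: words_def)
  next
    case gl then show ?thesis using Suc.IH[OF gl(3)] by simp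
  qed
qed

lemma edges_first:
  "(w', v', t) \<in> igs_edges S E tp I (Suc m) \<Longrightarrow>
    (\<exists>x w v. w' = x # w \<and> v' = x # v \<and> (w, v, t) \<in> igs_edges S E tp I m) \<or>
    (\<exists>x y q q'. w' = x # q \<and> v' = y # q' \<and> (x, y) \<in> E \<and> t = tp (x, y) \<and> length q = m \<and>
        list_all2 (\<lambda>a b. (a, b) \<in> I t) q q')"
proof (induction m arbitrary: w' v' t)
  case 0
  then obtain w0 a b where h: "w' = w0 @ [a]" "v' = w0 @ [b]" "t = tp (a, b)" "(a, b) \<in> E" "w0 \<in> words S 0"
    by (simp only: igs_edges.simps) blast
  then have "w0 = []" by (simp add: words_def)
  then have hh: "w' = a # []" "v' = b # []" using h by simp_all
  have "\<exists>x y q q'. w' = x # q \<and> v' = y # q' \<and> (x, y) \<in> E \<and> t = tp (x, y) \<and> length q = 0 \<and>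
        list_all2 (\<lambda>a b. (a, b) \<in> I t) q q'"
    by (intro exI[of _ a] exI[of _ b] exI[of _ "[]"]) (simp add: hh h(3,4))
  then show ?case by (rule disjI2)
next
  case (Suc m)
  from Suc.prems have mem: "(w', v', t) \<in> {(w @ [a], w @ [b], tp (a, b)) | w a b. w \<in> words S (Suc m) \<and> (a, b) \<in> E}
   \<union> {(w @ [a], v @ [b], t) | w v t a b. (w, v, t) \<in> igs_edges S E tp I (Suc m) \<and> (a, b) \<in> I t}"
    unfolding igs_edges.simps(2)[of S E tp I "Suc m"] .
  then consider
    (inner) w0 a b where "w' = w0 @ [a]" "v' = w0 @ [b]" "t = tp (a, b)" "(a, b) \<in> E" "w0 \<in> words S (Suc m)"
  | (gl) w0 v0 a b where "w' = w0 @ [a]" "v' = v0 @ [b]" "(w0, v0, t) \<in> igs_edges S E tp I (Suc m)" "(a, b) \<in> I t"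
    by blast
  then show ?case
  proof cases
    case inner
    obtain x w1 where w0: "w0 = x # w1" using inner(5) by (cases w0) (auto simp: words_def)
    have w1: "w1 \<in> words S m" using inner(5) w0 by (simp add: words_def)
    have "(w1 @ [a], w1 @ [b], tp (a, b)) \<in> igs_edges S E tp I (Suc m)"
      unfolding igs_edges.simps(2)[of S E tp I m] using w1 inner(4) by blast
    then have "\<exists>x' w v. w' = x' # w \<and> v' = x' # v \<and> (w, v, t) \<in> igs_edges S E tp I (Suc m)"
      by (intro exI[of _ x] exI[of _ "w1 @ [a]"] exI[of _ "w1 @ [b]"]) (simp add: inner(1,2,3) w0)
    then show ?thesis by (rule disjI1)
  next
    case gl
    from Suc.IH[OF gl(3)] show ?thesis
    proof
      assume "\<exists>x w v. w0 = x # w \<and> v0 = x # v \<and> (w, v, t) \<in> igs_edges S E tp I m"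
      then obtain x w1 v1 where h: "w0 = x # w1" "v0 = x # v1" "(w1, v1, t) \<in> igs_edges S E tp I m" by blast
      have "(w1 @ [a], v1 @ [b], t) \<in> igs_edges S E tp I (Suc m)" 
        unfolding igs_edges.simps(2)[of S E tp I m] using h(3) gl(4) by blast
      then have "\<exists>x' w v. w' = x' # w \<and> v' = x' # v \<and> (w, v, t) \<in> igs_edges S E tp I (Suc m)"
        by (intro exI[of _ x] exI[of _ "w1 @ [a]"] exI[of _ "v1 @ [b]"]) (simp add: gl(1,2) h(1,2))
      then show ?thesis by (rule disjI1)
    next
      assume "\<exists>x y q q'. w0 = x # q \<and> v0 = y # q' \<and> (x, y) \<in> E \<and> t = tp (x, y) \<and> length q = m \<and>
        list_all2 (\<lambda>a b. (a, b) \<in> I t) q q'"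
      then obtain x y q q' where h: "w0 = x # q" "v0 = y # q'" "(x, y) \<in> E" "t = tp (x, y)" "length q = m"
        "list_all2 (\<lambda>a b. (a, b) \<in> I t) q q'" by blast
      have "list_all2 (\<lambda>a b. (a, b) \<in> I t) (q @ [a]) (q' @ [b])"
        using h(6) gl(4) by (simp add: list_all2_appendI)
      then have "\<exists>x y qq qq'. w' = x # qq \<and> v' = y # qq' \<and> (x, y) \<in> E \<and> t = tp (x, y) \<and> length qq = Suc m \<and>
        list_all2 (\<lambda>a b. (a, b) \<in> I t) qq qq'"
        by (intro exI[of _ x] exI[of _ y] exI[of _ "q @ [a]"] exI[of _ "q' @ [b]"]) (simp add: gl(1,2) h)
      then show ?thesis by (rule disjI2)
    qed
  qed
qed

lemma list_all2_sets:
  "list_all2 P xs ys \<Longrightarrow> (\<And>a b. P a b \<Longrightarrow> a \<in> A \<and> b \<in> B) \<Longrightarrow> set xs \<subseteq> A \<and> set ys \<subseteq> B"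
  by (induction rule: list_all2_induct) auto

lemma pent_E_cases: "(x, y) \<in> pent_E \<Longrightarrow> x < 5 \<and> y = Suc x mod 5"
  by (auto simp: pent_E_def)

lemma pent_I_side: 
  assumes "x < 5" "(a, b) \<in> pent_I x" shows "a \<in> side (Suc x mod 5) \<and> b \<in> side ((x + 4) mod 5)"
  apply (insert assms(2))
  apply (rule five_E[OF assms(1)]; auto simp: pent_I_def side_def)
  done

lemma pot_lip:
  "(w, v, t) \<in> igs_edges pent_S pent_E pent_typ pent_I m \<Longrightarrow> a < 5 \<Longrightarrow>
     pot m a w \<le> Suc (pot m a v) \<and> pot m a v \<le> Suc (pot m a w)"
proof (induction m arbitrary: w v t a)
  case 0 then show ?case by simp
next
  case (Suc m)
  from edges_first[OF Suc.prems(1)] show ?case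
  proof
    assume "\<exists>x w1 v1. w = x # w1 \<and> v = x # v1 \<and> (w1, v1, t) \<in> igs_edges pent_S pent_E pent_typ pent_I m"
    then obtain x w1 v1 where h: "w = x # w1" "v = x # v1" "(w1, v1, t) \<in> igs_edges pent_S pent_E pent_typ pent_I m"
      by blast
    have i1: "\<And>c. c < 5 \<Longrightarrow> pot m c w1 \<le> Suc (pot m c v1)" and i2: "\<And>c. c < 5 \<Longrightarrow> pot m c v1 \<le> Suc (pot m c w1)"
      using Suc.IH[OF h(3)] by blast+
    show ?thesis unfolding h pot_Cons
      using comb_mono[OF Suc.prems(2) i1] comb_mono[OF Suc.prems(2) i2] by simp
  next
    assume "\<exists>x y q q'. w = x # q \<and> v = y # q' \<and> (x, y) \<in> pent_E \<and> t = pent_typ (x, y) \<and> length q = m \<and>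
        list_all2 (\<lambda>a b. (a, b) \<in> pent_I t) q q'"
    then obtain x y q q' where h: "w = x # q" "v = y # q'" "(x, y) \<in> pent_E" "t = pent_typ (x, y)" "length q = m"
        "list_all2 (\<lambda>a b. (a, b) \<in> pent_I t) q q'" by blast
    have xy: "x < 5" "y = Suc x mod 5" using pent_E_cases[OF h(3)] by auto
    have t: "t = x" using h(4) by (simp add: pent_typ_def)
    have lq': "length q' = m" using h(5,6) list_all2_lengthD by fastforce
    have sets: "set q \<subseteq> side (Suc x mod 5) \<and> set q' \<subseteq> side ((x + 4) mod 5)"
      by (rule list_all2_sets[OF h(6)]) (use pent_I_side[OF xy(1)] t in auto)
    have z1: "pot m (Suc x mod 5) q = 0" by (rule pot_zero) (use h(5) sets in auto)
    have z2: "pot m ((x + 4) mod 5) q' = 0" by (rule pot_zero) (use lq' sets in auto)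
    have f1: "\<And>c'. c' < 5 \<Longrightarrow> far c' (Suc x mod 5) \<Longrightarrow> 2 ^ m - 1 \<le> pot m c' q"
      by (rule pot_far) (use h(5) sets in auto)
    have f2: "\<And>c'. c' < 5 \<Longrightarrow> far c' ((x + 4) mod 5) \<Longrightarrow> 2 ^ m - 1 \<le> pot m c' q'"
      by (rule pot_far) (use lq' sets in auto)
    show ?thesis unfolding h(1,2) pot_Cons xy(2)
      by (rule comb_cross[of x a "\<lambda>c. pot m c q" "2 ^ m - 1" "\<lambda>c. pot m c q'", OF xy(1) Suc.prems(2) z1 f1 z2 f2])
  qed
qed

lemma pow_half2: "1 \<le> m \<Longrightarrow> real 2 ^ m / 2 \<le> real ((2::nat) ^ m - 1)"
proof -
  assume m: "1 \<le> m"
  have "(2::nat) ^ 1 \<le> 2 ^ m" using m by (intro power_increasing) auto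
  then have h: "(2::nat) ^ m \<ge> 2" by simp
  then have "real ((2::nat) ^ m - 1) = 2 ^ m - 1" by (simp add: of_nat_diff)
  moreover have "(2::real) ^ m \<ge> 2" using h
    by (metis of_nat_le_iff of_nat_numeral of_nat_power)
  ultimately show ?thesis by simp
qed

lemma pent_part:
  assumes t: "t \<in> pent_typ ` pent_E" and m: "1 \<le> m"
  shows "ereal (real 2 ^ m / 2) \<le> ereal_of_enat (graph_setdist (words pent_S m)
            (igs_graph_edges pent_S pent_E pent_typ pent_I m)
            (words (gluing_minus pent_I t) m) (words (gluing_plus pent_I t) m))"
proof -
  have t5: "t < 5" using t by (auto simp: pent_E_def pent_typ_def)
  let ?a = "(t + 4) mod 5" and ?c = "Suc t mod 5"
  have gm: "gluing_minus pent_I t = side ?a"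
    by (rule five_E[OF t5]; auto simp: gluing_minus_def pent_I_def side_def)
  have gp: "gluing_plus pent_I t = side ?c"
    by (rule five_E[OF t5]; auto simp: gluing_plus_def pent_I_def side_def)
  have fr: "far ?a ?c" by (rule five_E[OF t5]; simp add: far_def)
  have e: "enat (2 ^ m - 1) \<le> graph_setdist (words pent_S m)
            (igs_graph_edges pent_S pent_E pent_typ pent_I m)
            (words (gluing_minus pent_I t) m) (words (gluing_plus pent_I t) m)"
  proof (rule dist_lower[where f = "\<lambda>w. int (pot m ?a w)"])
    fix x y assume "(x, y) \<in> igs_graph_edges pent_S pent_E pent_typ pent_I m"
    then obtain tt where "(x, y, tt) \<in> igs_edges pent_S pent_E pent_typ pent_I m"
      by (auto simp: igs_graph_edges_def)
    from pot_lip[OF this, of ?a] have "int (pot m ?a x) \<le> int (pot m ?a y) + 1" "int (pot m ?a y) \<le> int (pot m ?a x) + 1"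
      by simp_all
    then show "\<bar>int (pot m ?a x) - int (pot m ?a y)\<bar> \<le> 1" by (simp only: abs_le_iff) linarith
  next
    fix a b assume a: "a \<in> words (gluing_minus pent_I t) m" and b: "b \<in> words (gluing_plus pent_I t) m"
    have z: "pot m ?a a = 0" by (rule pot_zero) (use a gm in \<open>auto simp: words_def\<close>)
    have n1: "2 ^ m - 1 \<le> pot m ?a b" by (rule pot_far[OF _ _ _ _ fr]) (use b gp in \<open>auto simp: words_def\<close>)
    have "int (2 ^ m - 1) \<le> int (pot m ?a b)" using n1 by (rule of_nat_mono)
    moreover have "int (pot m ?a a) = 0" using z by simp
    ultimately show "int (2 ^ m - 1) \<le> \<bar>int (pot m ?a a) - int (pot m ?a b)\<bar>" by linarith
  qed
  show ?thesis by (rule final_conv[OF e pow_half2[OF m]])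
qed


theorem proposition5p20:
  shows
  "(\<forall>d L s (S :: csym set) E typ I. cubical_IGS d L s S E typ I \<longrightarrow>
      (\<forall>t\<in>typ ` E. \<forall>m::nat. m \<ge> 1 \<longrightarrow>
         ereal (real L ^ m / 2) \<le>
         ereal_of_enat (graph_setdist (words S m) (igs_graph_edges S E typ I m)
            (words (gluing_minus I t) m) (words (gluing_plus I t) m))))
   \<and> (\<forall>t\<in>gasket_typ ` gasket_E. \<forall>m::nat. m \<ge> 1 \<longrightarrow>
         ereal (real 2 ^ m / 2) \<le>
         ereal_of_enat (graph_setdist (words gasket_S m)
            (igs_graph_edges gasket_S gasket_E gasket_typ gasket_I m)
            (words (gluing_minus gasket_I t) m) (words (gluing_plus gasket_I t) m)))
   \<and> (\<forall>t\<in>pent_typ ` pent_E. \<forall>m::nat. m \<ge> 1 \<longrightarrow>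
         ereal (real 2 ^ m / 2) \<le>
         ereal_of_enat (graph_setdist (words pent_S m)
            (igs_graph_edges pent_S pent_E pent_typ pent_I m)
            (words (gluing_minus pent_I t) m) (words (gluing_plus pent_I t) m)))"
  apply (intro conjI allI impI ballI)
    apply (rule cube_part; assumption)
   apply (rule gasket_part; assumption)
  apply (rule pent_part; assumption)
  done

end
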